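(* In a combinatorial auction as described in the context, let $(x^*,p)$ be a Walrasian equilibrium which is not a price-match equilibrium, and let $\bar\imath$ be a bidder witnessing this, i.e. there is no feasible allocation $x^{-\bar\imath}$ with $x^{-\bar\imath}_k=0$ for all $k\in\mathcal K_{\bar\imath}$, $p\,a^k\le b_k$ for all $k$ with $x^{-\bar\imath}_k=1$, and $p\bm A x^{-\bar\imath}=p\bm Ax^*$. Then for some small $\epsilon>0$, the payment vector $\bar\rho$ defined by $\bar\rho_i=p\,a^{i*}$ for $i\ne\bar\imath$ and $\bar\rho_{\bar\imath}=p\,a^{\bar\imath*}-\epsilon$ is core-selecting at $x^*$. In particular, there is a core point with strictly lower total payments than the WE payments.
   Context: Combinatorial auction (CA): item types $j\in\mathcal J=\{1,\dots,J\}$ with supply $c_j\in\mathbb Z_{\ge1}$ (supply vector $c$); bidders $\mathcal I=\{1,\dots,I\}$; a finite set of bids $\mathcal K$, each bid $k$ made by a bidder $i(k)$ and consisting of a bundle $a^k\in\mathbb Z^J_{\ge0}$, $a^k\le c$, and an amount $b_k\ge0$; $\mathcal K_i$ is the set of bids of bidder $i$; bids are taken to be truthful. $\bm A$ is the $J\times K$ matrix with columns $a^k$, $\bm B$ the $I\times K$ matrix with $\bm B_{i,k}=1$ iff $k\in\mathcal K_i$. A feasible allocation is $x\in\{0,1\}^K$ with $\bm Ax\le c$, $\bm Bx\le\bm 1$. For a set of bidders $\mathcal C$ and supply $c'$, $w(\mathcal C,c',\cdot)$ is the maximum total bid amount over feasible allocations (supply $c'$) using only bids of bidders in $\mathcal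 C$. $x^*$ is an efficient (optimal) allocation; $a^{i*}$, $b_{i*}$ are the bundle and amount of bidder $i$'s accepted bid ($\bm 0$, $0$ if none). A payment vector $\rho$ ($\rho_i=0$ for bidders with no accepted bid) is core-selecting at $x^*$ if $\rho_i\le b_{i*}$ for all $i$ and for all $\mathcal C\subseteq\mathcal I$: $\sum_{i\in\mathcal C}(b_{i*}-\rho_i)+\sum_{i\in\mathcal I}\rho_i\ge w(\mathcal C,c,\mathcal K^{\mathcal C})$, $\mathcal K^{\mathcal C}$ the bids of bidders in $\mathcal C$. A Walrasian equilibrium (WE) is $(x^*,p)$ with $x^*$ efficient, $p\in\mathbb R^J_{\ge0}$, surpluses $s_i=b_{i*}-p\,a^{i*}\ge0$, $p\,a^k+s_{i(k)}\ge b_k$ for every bid $k$, and $p_j=0$ whenever $(\bm Ax^* )_j<c_j$; payments are $p\,a^{i*}$. A WE $(x^*,p)$ is a price-match equilibrium (PME) if for every bidder $i$ there is a feasible allocation $x^{-i}$ with $x^{-i}_k=0$ for all $k\in\mathcal K_i$, $p\,a^k\le b_k$ for every $k$ with $x^{-i}_k=1$, and $p\bm Ax^{-i}=p\bm Ax^*$. (Items may include artificial items, i.e. valid cuts added as rows of $\bm A$; they are treated like any other item.) *)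

theory Defs
  imports Complex_Main
begin

text \<open>
Combinatorial auction data, passed explicitly:
  J :: 'j set       item types (finite), c j :: nat supply,
  I :: 'i set       bidders (finite),
  K :: 'k set       bids (finite), bidder k = i(k), a k j = (a^k)_j, b k = b_k.
An allocation x in {0,1}^K is represented by the set S = {k. x_k = 1} \<subseteq> K.
\<close>

definition feasible ::
  "'j set \<Rightarrow> 'k set \<Rightarrow> ('k \<Rightarrow> 'i) \<Rightarrow> ('k \<Rightarrow> 'j \<Rightarrow> nat) \<Rightarrow> ('j \<Rightarrow> nat) \<Rightarrow> 'k set \<Rightarrow> bool" where
  "feasible J K bidder a c S \<longleftrightarrow>
     S \<subseteq> K \<and> (\<forall>j\<in>J. (\<Sum>k\<in>S. a k j) \<le> c j) \<and> (\<forall>i. card {k\<in>S. bidder k = i} \<le> 1)"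

definition wval ::
  "'j set \<Rightarrow> 'k set \<Rightarrow> ('k \<Rightarrow> 'i) \<Rightarrow> ('k \<Rightarrow> 'j \<Rightarrow> nat) \<Rightarrow> ('k \<Rightarrow> real) \<Rightarrow> ('j \<Rightarrow> nat)
   \<Rightarrow> 'i set \<Rightarrow> real" where
  "wval J K bidder a b c C =
     Max {(\<Sum>k\<in>S. b k) | S. feasible J K bidder a c S \<and> (\<forall>k\<in>S. bidder k \<in> C)}"

definition efficient ::
  "'j set \<Rightarrow> 'k set \<Rightarrow> ('k \<Rightarrow> 'i) \<Rightarrow> ('k \<Rightarrow> 'j \<Rightarrow> nat) \<Rightarrow> ('k \<Rightarrow> real) \<Rightarrow> ('j \<Rightarrow> nat)
   \<Rightarrow> 'k set \<Rightarrow> bool" where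
  "efficient J K bidder a b c X \<longleftrightarrow>
     feasible J K bidder a c X \<and>
     (\<forall>S. feasible J K bidder a c S \<longrightarrow> (\<Sum>k\<in>S. b k) \<le> (\<Sum>k\<in>X. b k))"

text \<open>Accepted bundle a^{i*} and amount b_{i*} of bidder i under allocation X
  (X contains at most one bid of each bidder; empty sum = 0 if none).\<close>
definition acc_bundle :: "('k \<Rightarrow> 'i) \<Rightarrow> ('k \<Rightarrow> 'j \<Rightarrow> nat) \<Rightarrow> 'k set \<Rightarrow> 'i \<Rightarrow> 'j \<Rightarrow> nat" where
  "acc_bundle bidder a X i j = (\<Sum>k\<in>{k\<in>X. bidder k = i}. a k j)"

definition acc_amount :: "('k \<Rightarrow> 'i) \<Rightarrow> ('k \<Rightarrow> real) \<Rightarrow> 'k set \<Rightarrow> 'i \<Rightarrow> real" where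
  "acc_amount bidder b X i = (\<Sum>k\<in>{k\<in>X. bidder k = i}. b k)"

definition price :: "'j set \<Rightarrow> ('j \<Rightarrow> real) \<Rightarrow> ('j \<Rightarrow> nat) \<Rightarrow> real" where
  "price J p v = (\<Sum>j\<in>J. p j * real (v j))"

definition demand :: "('k \<Rightarrow> 'j \<Rightarrow> nat) \<Rightarrow> 'k set \<Rightarrow> 'j \<Rightarrow> nat" where
  "demand a S j = (\<Sum>k\<in>S. a k j)"

definition walrasian ::
  "'j set \<Rightarrow> 'i set \<Rightarrow> 'k set \<Rightarrow> ('k \<Rightarrow> 'i) \<Rightarrow> ('k \<Rightarrow> 'j \<Rightarrow> nat) \<Rightarrow> ('k \<Rightarrow> real) \<Rightarrow> ('j \<Rightarrow> nat)
   \<Rightarrow> 'k set \<Rightarrow> ('j \<Rightarrow> real) \<Rightarrow> bool" where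
  "walrasian J I K bidder a b c X p \<longleftrightarrow>
     efficient J K bidder a b c X \<and>
     (\<forall>j\<in>J. p j \<ge> 0) \<and>
     (\<forall>i\<in>I. acc_amount bidder b X i - price J p (acc_bundle bidder a X i) \<ge> 0) \<and>
     (\<forall>k\<in>K. price J p (a k) +
              (acc_amount bidder b X (bidder k) - price J p (acc_bundle bidder a X (bidder k))) \<ge> b k) \<and>
     (\<forall>j\<in>J. demand a X j < c j \<longrightarrow> p j = 0)"

definition price_match_bidder ::
  "'j set \<Rightarrow> 'k set \<Rightarrow> ('k \<Rightarrow> 'i) \<Rightarrow> ('k \<Rightarrow> 'j \<Rightarrow> nat) \<Rightarrow> ('k \<Rightarrow> real) \<Rightarrow> ('j \<Rightarrow> nat)
   \<Rightarrow> 'k set \<Rightarrow> ('j \<Rightarrow> real) \<Rightarrow> 'i \<Rightarrow> bool" where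
  "price_match_bidder J K bidder a b c X p i \<longleftrightarrow>
     (\<exists>S. feasible J K bidder a c S \<and> (\<forall>k\<in>S. bidder k \<noteq> i) \<and>
          (\<forall>k\<in>S. price J p (a k) \<le> b k) \<and>
          price J p (demand a S) = price J p (demand a X))"

definition price_match_eq ::
  "'j set \<Rightarrow> 'i set \<Rightarrow> 'k set \<Rightarrow> ('k \<Rightarrow> 'i) \<Rightarrow> ('k \<Rightarrow> 'j \<Rightarrow> nat) \<Rightarrow> ('k \<Rightarrow> real) \<Rightarrow> ('j \<Rightarrow> nat)
   \<Rightarrow> 'k set \<Rightarrow> ('j \<Rightarrow> real) \<Rightarrow> bool" where
  "price_match_eq J I K bidder a b c X p \<longleftrightarrow>
     walrasian J I K bidder a b c X p \<and> (\<forall>i\<in>I. price_match_bidder J K bidder a b c X p i)"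

definition core_selecting ::
  "'j set \<Rightarrow> 'i set \<Rightarrow> 'k set \<Rightarrow> ('k \<Rightarrow> 'i) \<Rightarrow> ('k \<Rightarrow> 'j \<Rightarrow> nat) \<Rightarrow> ('k \<Rightarrow> real) \<Rightarrow> ('j \<Rightarrow> nat)
   \<Rightarrow> 'k set \<Rightarrow> ('i \<Rightarrow> real) \<Rightarrow> bool" where
  "core_selecting J I K bidder a b c X \<rho> \<longleftrightarrow>
     (\<forall>i\<in>I. {k\<in>X. bidder k = i} = {} \<longrightarrow> \<rho> i = 0) \<and>
     (\<forall>i\<in>I. \<rho> i \<le> acc_amount bidder b X i) \<and>
     (\<forall>C. C \<subseteq> I \<longrightarrow>
        (\<Sum>i\<in>C. acc_amount bidder b X i - \<rho> i) + (\<Sum>i\<in>I. \<rho> i) \<ge> wval J K bidder a b c C)"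

end

theory Submission
  imports Defs
begin

lemma price_demand:
  assumes "finite S"
  shows "price J p (demand a S) = (\<Sum>k\<in>S. price J p (a k))"
  unfolding price_def demand_def
  by (simp add: of_nat_sum sum_distrib_left sum.swap[of _ J S])

lemma acc_bundle_demand: "acc_bundle bidder a X i = demand a {k\<in>X. bidder k = i}"
  unfolding acc_bundle_def demand_def by (rule ext) simp

lemma sum_acc_price:
  assumes "finite X" "finite I" "bidder ` X \<subseteq> I"
  shows "(\<Sum>i\<in>I. price J p (acc_bundle bidder a X i)) = price J p (demand a X)"
proof -
  have "(\<Sum>i\<in>I. price J p (acc_bundle bidder a X i))
      = (\<Sum>i\<in>I. \<Sum>k\<in>{k\<in>X. bidder k = i}. price J p (a k))"
    using assms(1) by (simp add: acc_bundle_demand price_demand)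
  also have "\<dots> = (\<Sum>k\<in>X. price J p (a k))"
    using sum.group[OF assms] by simp
  also have "\<dots> = price J p (demand a X)" using assms(1) by (simp add: price_demand)
  finally show ?thesis .
qed

lemma feasible_inj:
  assumes "feasible J K bidder a c S" "finite K"
  shows "inj_on bidder S"
proof (rule inj_onI, rule ccontr)
  fix x y assume xy: "x \<in> S" "y \<in> S" "bidder x = bidder y" "x \<noteq> y"
  have fS: "finite S" using assms unfolding feasible_def by (meson finite_subset)
  have "{x, y} \<subseteq> {k\<in>S. bidder k = bidder x}" using xy by auto
  hence "card {x,y} \<le> card {k\<in>S. bidder k = bidder x}" using fS by (intro card_mono) auto
  moreover have "card {k\<in>S. bidder k = bidder x} \<le> 1" using assms unfolding feasible_def by blast
  ultimately show False using xy by simp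
qed

lemma feasible_single:
  assumes "feasible J K bidder a c S" "finite K" "k \<in> S"
  shows "{k'\<in>S. bidder k' = bidder k} = {k}"
  using feasible_inj[OF assms(1,2)] assms(3) by (auto dest: inj_onD)

theorem theorem2:
  fixes J :: "'j set" and I :: "'i set" and K :: "'k set"
    and bidder :: "'k \<Rightarrow> 'i" and a :: "'k \<Rightarrow> 'j \<Rightarrow> nat" and b :: "'k \<Rightarrow> real"
    and c :: "'j \<Rightarrow> nat" and X :: "'k set" and p :: "'j \<Rightarrow> real" and ibar :: 'i
  assumes "finite J" and "finite I" and "finite K"
    and "\<forall>j\<in>J. c j \<ge> 1"
    and "\<forall>k\<in>K. bidder k \<in> I"
    and "\<forall>k\<in>K. \<forall>j\<in>J. a k j \<le> c j"
    and "\<forall>k\<in>K. b k \<ge> 0"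
    and WE: "walrasian J I K bidder a b c X p"
    and "ibar \<in> I"
    and notPM: "\<not> price_match_bidder J K bidder a b c X p ibar"
  shows "(\<exists>\<epsilon>>0. core_selecting J I K bidder a b c X
            (\<lambda>i. if i = ibar then price J p (acc_bundle bidder a X i) - \<epsilon>
                  else price J p (acc_bundle bidder a X i)))
       \<and> (\<exists>\<rho>. core_selecting J I K bidder a b c X \<rho> \<and>
               (\<Sum>i\<in>I. \<rho> i) < (\<Sum>i\<in>I. price J p (acc_bundle bidder a X i)))"
proof -
  define s where "s i = acc_amount bidder b X i - price J p (acc_bundle bidder a X i)" for i
  define P where "P = price J p (demand a X)"
  define gap where "gap S = P + (\<Sum>k\<in>S. s (bidder k)) - (\<Sum>k\<in>S. b k)" for S
  have fX: "feasible J K bidder a c X" using WE unfolding walrasian_def efficient_def by blast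
  have XK: "X \<subseteq> K" using fX unfolding feasible_def by blast
  have finX: "finite X" using XK assms(3) by (meson finite_subset)
  have pnn: "\<forall>j\<in>J. p j \<ge> 0" using WE unfolding walrasian_def by blast
  have snn: "\<And>i. i \<in> I \<Longrightarrow> s i \<ge> 0" using WE unfolding walrasian_def s_def by blast
  have bk: "\<And>k. k \<in> K \<Longrightarrow> b k \<le> price J p (a k) + s (bidder k)"
    using WE unfolding walrasian_def s_def by blast
  have zerop: "\<And>j. j \<in> J \<Longrightarrow> demand a X j < c j \<Longrightarrow> p j = 0"
    using WE unfolding walrasian_def by blast
  have sumP: "(\<Sum>i\<in>I. price J p (acc_bundle bidder a X i)) = P"
    unfolding P_def using sum_acc_price[OF finX assms(2)] XK assms(5) by blast
  have F0: "price J p (demand a S) \<le> P" if fS: "feasible J K bidder a c S" for S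
    unfolding P_def price_def
  proof (rule sum_mono)
    fix j assume j: "j \<in> J"
    show "p j * real (demand a S j) \<le> p j * real (demand a X j)"
    proof (cases "demand a X j < c j")
      case True then show ?thesis using zerop j by simp
    next
      case False
      have "demand a S j \<le> c j" using fS j unfolding feasible_def demand_def by blast
      with False show ?thesis using pnn j by (intro mult_left_mono) auto
    qed
  qed
  have F1: "gap S \<ge> 0 \<and> (gap S = 0 \<longrightarrow> price J p (demand a S) = P \<and> (\<forall>k\<in>S. price J p (a k) \<le> b k))"
    if fS: "feasible J K bidder a c S" for S
  proof -
    have SK: "S \<subseteq> K" using fS unfolding feasible_def by blast
    have finS: "finite S" using SK assms(3) by (meson finite_subset)
    define t where "t k = price J p (a k) + s (bidder k) - b k" for k
    have tnn: "\<forall>k\<in>S. t k \<ge> 0" using bk SK unfolding t_def by fastforce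
    have eq: "gap S = (P - price J p (demand a S)) + (\<Sum>k\<in>S. t k)"
      unfolding gap_def t_def using finS
      by (simp add: price_demand sum.distrib sum_subtractf)
    have g1: "P - price J p (demand a S) \<ge> 0" using F0[OF fS] by simp
    have g2: "(\<Sum>k\<in>S. t k) \<ge> 0" using tnn by (simp add: sum_nonneg)
    show ?thesis
    proof
      show "gap S \<ge> 0" using eq g1 g2 by simp
      show "gap S = 0 \<longrightarrow> price J p (demand a S) = P \<and> (\<forall>k\<in>S. price J p (a k) \<le> b k)"
      proof
        assume "gap S = 0"
        hence h1: "price J p (demand a S) = P" and h2: "(\<Sum>k\<in>S. t k) = 0" using eq g1 g2 by linarith+
        have "\<forall>k\<in>S. t k = 0" using h2 tnn finS sum_nonneg_eq_0_iff by blast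
        hence "\<forall>k\<in>S. price J p (a k) \<le> b k"
          using snn SK assms(5) unfolding t_def by force
        with h1 show "price J p (demand a S) = P \<and> (\<forall>k\<in>S. price J p (a k) \<le> b k)" by blast
      qed
    qed
  qed
  have F2: "gap S > 0" if fS: "feasible J K bidder a c S" and nb: "\<forall>k\<in>S. bidder k \<noteq> ibar" for S
  proof (rule ccontr)
    assume "\<not> gap S > 0"
    hence "gap S = 0" using F1[OF fS] by simp
    hence "price J p (demand a S) = P \<and> (\<forall>k\<in>S. price J p (a k) \<le> b k)" using F1[OF fS] by blast
    hence "price_match_bidder J K bidder a b c X p ibar"
      unfolding price_match_bidder_def P_def using fS nb by blast
    with notPM show False by blast
  qed
  have F3: "(\<Sum>k\<in>S. s (bidder k)) \<le> (\<Sum>i\<in>C. s i)"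
    if fS: "feasible J K bidder a c S" and SC: "\<forall>k\<in>S. bidder k \<in> C" and CI: "C \<subseteq> I" for S C
  proof -
    have inj: "inj_on bidder S" using feasible_inj[OF fS assms(3)] .
    have finC: "finite C" using CI assms(2) by (meson finite_subset)
    have "(\<Sum>k\<in>S. s (bidder k)) = (\<Sum>i\<in>bidder ` S. s i)" using sum.reindex[OF inj, of s] by (simp add: comp_def)
    also have "\<dots> \<le> (\<Sum>i\<in>C. s i)"
      using SC CI snn finC by (intro sum_mono2) auto
    finally show ?thesis .
  qed
  define G where "G = {gap S | S. feasible J K bidder a c S \<and> (\<forall>k\<in>S. bidder k \<noteq> ibar)}"
  have feas0: "feasible J K bidder a c {}" unfolding feasible_def by simp
  have finG: "finite G"
  proof -
    have "G \<subseteq> gap ` Pow K" unfolding G_def feasible_def by auto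
    thus ?thesis using assms(3) by (meson finite_imageI finite_Pow_iff finite_subset)
  qed
  have neG: "G \<noteq> {}" unfolding G_def using feas0 by blast
  define \<epsilon> where "\<epsilon> = Min G"
  have epos: "\<epsilon> > 0" unfolding \<epsilon>_def using finG neG F2 unfolding G_def by (subst Min_gr_iff) auto
  have ele: "\<epsilon> \<le> gap S" if "feasible J K bidder a c S" "\<forall>k\<in>S. bidder k \<noteq> ibar" for S
    unfolding \<epsilon>_def using finG that unfolding G_def by (intro Min_le) auto
  define \<rho> where "\<rho> = (\<lambda>i. if i = ibar then price J p (acc_bundle bidder a X i) - \<epsilon>
                  else price J p (acc_bundle bidder a X i))"
  have ibar_acc: "{k\<in>X. bidder k = ibar} \<noteq> {}"
  proof
    assume none: "{k\<in>X. bidder k = ibar} = {}"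
    have "\<forall>k\<in>X. price J p (a k) \<le> b k"
    proof
      fix k assume k: "k \<in> X"
      have single: "{k'\<in>X. bidder k' = bidder k} = {k}" using feasible_single[OF fX assms(3) k] .
      have "s (bidder k) \<ge> 0" using snn k XK assms(5) by blast
      thus "price J p (a k) \<le> b k"
        unfolding s_def acc_amount_def acc_bundle_def single by simp
    qed
    hence "price_match_bidder J K bidder a b c X p ibar"
      unfolding price_match_bidder_def using fX none by blast
    with notPM show False by blast
  qed
  have sumrho: "(\<Sum>i\<in>I. \<rho> i) = P - \<epsilon>"
  proof -
    have "(\<Sum>i\<in>I. \<rho> i) = (\<Sum>i\<in>I. price J p (acc_bundle bidder a X i) - (if i = ibar then \<epsilon> else 0))"
      unfolding \<rho>_def by (intro sum.cong) auto
    also have "\<dots> = P - \<epsilon>" using sumP assms(2) assms(9) by (simp add: sum_subtractf)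
    finally show ?thesis .
  qed
  have core: "core_selecting J I K bidder a b c X \<rho>"
    unfolding core_selecting_def
  proof (intro conjI ballI allI impI)
    fix i assume "i \<in> I" and e: "{k\<in>X. bidder k = i} = {}"
    hence "i \<noteq> ibar" using ibar_acc by blast
    thus "\<rho> i = 0" unfolding \<rho>_def price_def acc_bundle_def e by simp
  next
    fix i assume i: "i \<in> I"
    show "\<rho> i \<le> acc_amount bidder b X i" using snn[OF i] epos unfolding \<rho>_def s_def by auto
  next
    fix C assume CI: "C \<subseteq> I"
    have finC: "finite C" using CI assms(2) by (meson finite_subset)
    have lhs1: "(\<Sum>i\<in>C. acc_amount bidder b X i - \<rho> i) = (\<Sum>i\<in>C. s i + (if i = ibar then \<epsilon> else 0))"
      unfolding \<rho>_def s_def by (intro sum.cong) auto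
    define L where "L = (\<Sum>i\<in>C. acc_amount bidder b X i - \<rho> i) + (\<Sum>i\<in>I. \<rho> i)"
    have Leq: "L = (\<Sum>i\<in>C. s i) + (if ibar \<in> C then \<epsilon> else 0) + P - \<epsilon>"
      unfolding L_def lhs1 sumrho using finC by (simp add: sum.distrib)
    let ?W = "{(\<Sum>k\<in>S. b k) | S. feasible J K bidder a c S \<and> (\<forall>k\<in>S. bidder k \<in> C)}"
    have finW: "finite ?W"
    proof -
      have "?W \<subseteq> (\<lambda>S. \<Sum>k\<in>S. b k) ` Pow K" unfolding feasible_def by auto
      thus ?thesis using assms(3) by (meson finite_imageI finite_Pow_iff finite_subset)
    qed
    have neW: "?W \<noteq> {}" using feas0 by blast
    have "Max ?W \<le> L"
    proof (rule Max.boundedI[OF finW neW])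
      fix w assume "w \<in> ?W"
      then obtain S where w: "w = (\<Sum>k\<in>S. b k)" and fS: "feasible J K bidder a c S"
        and SC: "\<forall>k\<in>S. bidder k \<in> C" by blast
      have f3: "(\<Sum>k\<in>S. s (bidder k)) \<le> (\<Sum>i\<in>C. s i)" using F3[OF fS SC CI] .
      have gapge: "gap S \<ge> 0" using F1[OF fS] by blast
      show "w \<le> L"
      proof (cases "ibar \<in> C")
        case True
        then show ?thesis using Leq w f3 gapge unfolding gap_def by simp
      next
        case False
        hence "\<forall>k\<in>S. bidder k \<noteq> ibar" using SC by blast
        hence "\<epsilon> \<le> gap S" using ele fS by blast
        then show ?thesis using Leq w f3 False unfolding gap_def by simp
      qed
    qed
    thus "(\<Sum>i\<in>C. acc_amount bidder b X i - \<rho> i) + (\<Sum>i\<in>I. \<rho> i) \<ge> wval J K bidder a b c C"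
      unfolding wval_def L_def by simp
  qed
  show ?thesis
  proof
    show "\<exists>\<epsilon>>0. core_selecting J I K bidder a b c X
            (\<lambda>i. if i = ibar then price J p (acc_bundle bidder a X i) - \<epsilon>
                  else price J p (acc_bundle bidder a X i))"
      using core epos unfolding \<rho>_def by blast
    show "\<exists>\<rho>. core_selecting J I K bidder a b c X \<rho> \<and>
               (\<Sum>i\<in>I. \<rho> i) < (\<Sum>i\<in>I. price J p (acc_bundle bidder a X i))"
      using core sumrho sumP epos by auto
  qed
qed

end
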